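(* Let $\mu\in\mathcal{L}$. If $\mu$ has an atom at $x\in\mathbb{R}$, then $W(\mu)$ has an atom at $e^{-ix}$ with $W(\mu)(\{e^{-ix}\})=\mu(\{x\})$. Conversely, if $e^{-ix}$ is an atom of $W(\mu)$, then there is a unique $n\in\mathbb{Z}$ such that $\mu$ has an atom at $x+2\pi n$, and $\mu(\{x+2\pi n\})=W(\mu)(\{e^{-ix}\})$.
   Context: For a probability measure $\mu$ on $\mathbb{R}$, $G_\mu(z)=\int\frac{d\mu(x)}{z-x}$ and $F_\mu=1/G_\mu$ on the upper half-plane $\mathbb{C}^+$. $\mathcal{L}$ is the set of probability measures $\mu$ on $\mathbb{R}$ with $F_\mu(z+2\pi)=F_\mu(z)+2\pi$ for all $z\in\mathbb{C}^+$. $W(\mu)$ is the probability measure on the unit circle obtained as the push-forward of $\mu$ under $x\mapsto e^{-ix}$. *)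

theory Defs
  imports "HOL-Probability.Probability"
begin

definition real_prob_measure :: "real measure \<Rightarrow> bool" where
  "real_prob_measure \<mu> \<longleftrightarrow> prob_space \<mu> \<and> sets \<mu> = sets borel"

definition cauchy_G :: "real measure \<Rightarrow> complex \<Rightarrow> complex" where
  "cauchy_G \<mu> z = (\<integral>x. 1 / (z - complex_of_real x) \<partial>\<mu>)"

definition cauchy_F :: "real measure \<Rightarrow> complex \<Rightarrow> complex" where
  "cauchy_F \<mu> z = 1 / cauchy_G \<mu> z"

definition classL :: "real measure set" where
  "classL = {\<mu>. real_prob_measure \<mu> \<and>
     (\<forall>z. Im z > 0 \<longrightarrow> cauchy_F \<mu> (z + complex_of_real (2*pi)) = cauchy_F \<mu> z + complex_of_real (2*pi))}"

text \<open>Wrapping: push-forward under x \<mapsto> exp(-ix), a measure on the complex plane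
  (concentrated on the unit circle).\<close>
definition wrap :: "real measure \<Rightarrow> complex measure" where
  "wrap \<mu> = distr \<mu> borel (\<lambda>x. cis (- x))"

end

theory Submission
  imports Defs
begin

lemma F_shift1:
  assumes "\<mu> \<in> classL" "Im z > 0"
  shows "cauchy_F \<mu> (z + complex_of_real (2*pi)) = cauchy_F \<mu> z + complex_of_real (2*pi)"
  using assms unfolding classL_def by blast

lemma F_shift_nat:
  assumes "\<mu> \<in> classL" "Im z > 0"
  shows "cauchy_F \<mu> (z + complex_of_real (2 * pi * real k)) = cauchy_F \<mu> z + complex_of_real (2 * pi * real k)"
proof (induction k)
  case 0 then show ?case by simp
next
  case (Suc k)
  have im: "Im (z + complex_of_real (2 * pi * real k)) > 0" using assms(2) by simp
  have e: "complex_of_real (2 * pi * real (Suc k)) = complex_of_real (2 * pi * real k) + complex_of_real (2*pi)"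
    by (simp add: distrib_left)
  show ?case
    unfolding e add.assoc[symmetric] F_shift1[OF assms(1) im] Suc by simp
qed

lemma F_shift_int:
  assumes "\<mu> \<in> classL" "Im z > 0"
  shows "cauchy_F \<mu> (z + complex_of_real (2 * pi * of_int n)) = cauchy_F \<mu> z + complex_of_real (2 * pi * of_int n)"
proof (cases "n \<ge> 0")
  case True
  then obtain k where k: "n = int k" by (rule nonneg_int_cases)
  have "real_of_int n = real k" using k by simp
  then show ?thesis using F_shift_nat[OF assms, of k] by simp
next
  case False
  then have "- n \<ge> 0" by simp
  then obtain k where k0: "- n = int k" by (rule nonneg_int_cases)
  have r: "real_of_int n = - real k" using k0 by linarith
  define w where "w = z + complex_of_real (2 * pi * of_int n)"
  have "Im w > 0" using assms(2) by (simp add: w_def)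
  from F_shift_nat[OF assms(1) this, of k]
  have A: "cauchy_F \<mu> (w + complex_of_real (2 * pi * real k)) = cauchy_F \<mu> w + complex_of_real (2 * pi * real k)" .
  have B: "w + complex_of_real (2 * pi * real k) = z" unfolding w_def r by simp
  have "cauchy_F \<mu> z = cauchy_F \<mu> w + complex_of_real (2 * pi * real k)" using A B by simp
  then have "cauchy_F \<mu> w = cauchy_F \<mu> z - complex_of_real (2 * pi * real k)" by simp
  then show ?thesis using w_def r by simp
qed

lemma inv_suc_lim: "(\<lambda>m. complex_of_real (1 / real (Suc m))) \<longlonglongrightarrow> 0"
proof -
  have "(\<lambda>m. inverse (real (Suc m))) \<longlonglongrightarrow> 0" by (rule LIMSEQ_inverse_real_of_nat)
  then have "(\<lambda>m. 1 / real (Suc m)) \<longlonglongrightarrow> 0" by (simp add: inverse_eq_divide)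
  then have "(\<lambda>m. complex_of_real (1 / real (Suc m))) \<longlonglongrightarrow> complex_of_real 0" by (rule tendsto_of_real)
  then show ?thesis by simp
qed

lemma nb:
  fixes y :: real and D :: complex
  assumes "y > 0" "y \<le> cmod D"
  shows "cmod ((\<i> * complex_of_real y) * (1/D)) \<le> 1"
proof -
  have pos: "cmod D > 0" using assms by linarith
  have "cmod ((\<i> * complex_of_real y) * (1/D)) = y / cmod D"
    using assms(1) by (simp add: norm_mult norm_divide)
  also have "y / cmod D \<le> 1" using assms pos by (simp add: divide_le_eq_1)
  finally show ?thesis .
qed

lemma G_limit:
  assumes "real_prob_measure \<mu>"
  shows "(\<lambda>m. (\<i> * of_real (1 / Suc m)) * cauchy_G \<mu> (of_real a + \<i> * of_real (1 / Suc m)))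
          \<longlonglongrightarrow> complex_of_real (measure \<mu> {a})"
proof -
  interpret prob_space \<mu> using assms unfolding real_prob_measure_def by auto
  have sets: "sets \<mu> = sets borel" using assms unfolding real_prob_measure_def by auto
  have mb: "f \<in> borel_measurable \<mu>" if "f \<in> borel_measurable borel" for f :: "real \<Rightarrow> complex"
    using that measurable_cong_sets[OF sets refl, of borel] by blast
  define s where "s m x = (\<i> * of_real (1 / Suc m)) * (1 / (of_real a + \<i> * of_real (1 / Suc m) - complex_of_real x))" for m x
  have eq: "(\<i> * of_real (1 / Suc m)) * cauchy_G \<mu> (of_real a + \<i> * of_real (1 / Suc m)) = integral\<^sup>L \<mu> (s m)" for m
    unfolding cauchy_G_def s_def by (rule integral_mult_right_zero[symmetric])
  have "(\<lambda>m. integral\<^sup>L \<mu> (s m)) \<longlonglongrightarrow> integral\<^sup>L \<mu> (\<lambda>x. complex_of_real (indicator {a} x))"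
  proof (rule integral_dominated_convergence[where w="\<lambda>_. 1"])
    show "(\<lambda>x. complex_of_real (indicator {a} x)) \<in> borel_measurable \<mu>"
      by (rule mb) measurable
    show "s m \<in> borel_measurable \<mu>" for m
      unfolding s_def by (rule mb) measurable
    show "integrable \<mu> (\<lambda>_. 1::real)" by simp
    show "AE x in \<mu>. (\<lambda>m. s m x) \<longlonglongrightarrow> complex_of_real (indicator {a} x)"
    proof (rule AE_I2)
      fix x
      show "(\<lambda>m. s m x) \<longlonglongrightarrow> complex_of_real (indicator {a} x)"
      proof (cases "x = a")
        case True
        have gen: "\<And>c::complex. c \<noteq> 0 \<Longrightarrow> c * (1/c) = 1" by simp
        have "s m x = 1" for m
        proof -
          have r: "1 / real (Suc m) \<noteq> 0" by simp
          have ne: "\<i> * complex_of_real (1 / real (Suc m)) \<noteq> 0"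
            using r by (simp only: mult_eq_0_iff of_real_eq_0_iff complex_i_not_zero simp_thms)
          have "s m x = (\<i> * complex_of_real (1 / real (Suc m))) * (1 / (\<i> * complex_of_real (1 / real (Suc m))))"
            unfolding s_def True by simp
          also have "\<dots> = 1" using ne by (rule gen)
          finally show ?thesis .
        qed
        then show ?thesis using True by simp
      next
        case False
        have "(\<lambda>m. (\<i> * of_real (1 / Suc m)) * (1 / (of_real a + \<i> * of_real (1 / Suc m) - complex_of_real x)))
              \<longlonglongrightarrow> (\<i> * 0) * (1 / (of_real a + \<i> * 0 - complex_of_real x))"
          using False by (intro tendsto_divide tendsto_mult tendsto_add tendsto_diff tendsto_const inv_suc_lim) simp
        then show ?thesis using False unfolding s_def by simp
      qed
    qed
    show "AE x in \<mu>. norm (s m x) \<le> 1" for m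
    proof (rule AE_I2)
      fix x
      have im: "Im (of_real a + \<i> * of_real (1 / Suc m) - complex_of_real x) = 1 / real (Suc m)"
        by simp
      have "1 / real (Suc m) \<le> cmod (of_real a + \<i> * of_real (1 / Suc m) - complex_of_real x)"
        using abs_Im_le_cmod[of "of_real a + \<i> * of_real (1 / Suc m) - complex_of_real x"] unfolding im by simp
      then show "norm (s m x) \<le> 1" unfolding s_def
        by (intro nb) simp_all
    qed
  qed
  moreover have sp: "space \<mu> = UNIV" using sets_eq_imp_space_eq[OF sets] by simp
  ultimately show ?thesis using eq by simp
qed

lemma F_limit0:
  assumes "real_prob_measure \<mu>" "measure \<mu> {a} > 0"
  shows "(\<lambda>m. cauchy_F \<mu> (of_real a + \<i> * of_real (1 / Suc m))) \<longlonglongrightarrow> 0"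
proof -
  define c where "c m = \<i> * complex_of_real (1 / real (Suc m))" for m
  define g where "g m = c m * cauchy_G \<mu> (of_real a + c m)" for m
  have gl: "g \<longlonglongrightarrow> complex_of_real (measure \<mu> {a})"
    using G_limit[OF assms(1), of a] unfolding g_def c_def .
  have cl: "c \<longlonglongrightarrow> \<i> * 0" unfolding c_def by (intro tendsto_mult tendsto_const inv_suc_lim)
  have pne: "complex_of_real (measure \<mu> {a}) \<noteq> 0" using assms(2) by simp
  have "(\<lambda>m. c m * (1 / g m)) \<longlonglongrightarrow> (\<i> * 0) * (1 / complex_of_real (measure \<mu> {a}))"
    by (intro tendsto_mult tendsto_divide tendsto_const cl gl pne)
  moreover have gen: "\<And>(cc::complex) G. cc \<noteq> 0 \<Longrightarrow> 1 / G = cc * (1 / (cc * G))" by simp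
  have "cauchy_F \<mu> (of_real a + \<i> * of_real (1 / Suc m)) = c m * (1 / g m)" for m
  proof -
    have r: "1 / real (Suc m) \<noteq> 0" by simp
    have ne: "c m \<noteq> 0"
      unfolding c_def using r by (simp only: mult_eq_0_iff of_real_eq_0_iff complex_i_not_zero simp_thms)
    have z: "of_real a + \<i> * of_real (1 / Suc m) = of_real a + c m" by (simp only: c_def)
    show ?thesis unfolding cauchy_F_def g_def z by (rule gen[OF ne])
  qed
  ultimately show ?thesis by simp
qed

lemma unique_atom:
  assumes "\<mu> \<in> classL" "measure \<mu> {a} > 0" "measure \<mu> {a + 2 * pi * of_int n} > 0"
  shows "n = 0"
proof -
  have P: "real_prob_measure \<mu>" using assms(1) unfolding classL_def by blast
  define b where "b = a + 2 * pi * of_int n"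
  have la: "(\<lambda>m. cauchy_F \<mu> (of_real a + \<i> * of_real (1 / Suc m))) \<longlonglongrightarrow> 0"
    by (rule F_limit0[OF P assms(2)])
  have lb: "(\<lambda>m. cauchy_F \<mu> (of_real b + \<i> * of_real (1 / Suc m))) \<longlonglongrightarrow> 0"
    by (rule F_limit0[OF P]) (use assms(3) b_def in simp)
  have eq: "cauchy_F \<mu> (of_real b + \<i> * of_real (1 / Suc m)) - cauchy_F \<mu> (of_real a + \<i> * of_real (1 / Suc m))
      = complex_of_real (2 * pi * of_int n)" for m
  proof -
    have im: "Im (of_real a + \<i> * of_real (1 / Suc m)) > 0" by simp
    have bb: "of_real b + \<i> * of_real (1 / Suc m) = (of_real a + \<i> * of_real (1 / Suc m)) + complex_of_real (2 * pi * of_int n)"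
      unfolding b_def by (simp add: algebra_simps)
    show ?thesis unfolding bb F_shift_int[OF assms(1) im, of n] by simp
  qed
  have "(\<lambda>m. cauchy_F \<mu> (of_real b + \<i> * of_real (1 / Suc m)) - cauchy_F \<mu> (of_real a + \<i> * of_real (1 / Suc m))) \<longlonglongrightarrow> 0 - 0"
    by (intro tendsto_diff la lb)
  then have "(\<lambda>m. complex_of_real (2 * pi * of_int n)) \<longlonglongrightarrow> 0" unfolding eq by simp
  then have "complex_of_real (2 * pi * of_int n) = 0" using LIMSEQ_const_iff by blast
  then show ?thesis by simp
qed

lemma cis_preimage: "cis (- t) = cis (- x) \<longleftrightarrow> (\<exists>n::int. t = x + 2 * pi * of_int n)"
proof -
  have "cis (- t) = cis (- x) \<longleftrightarrow> Re (cis (- t)) = Re (cis (- x)) \<and> Im (cis (- t)) = Im (cis (- x))"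
    by (rule complex_eq_iff)
  also have "\<dots> \<longleftrightarrow> cos t = cos x \<and> - sin t = - sin x"
    by (simp only: cis.sel cos_minus sin_minus)
  also have "\<dots> \<longleftrightarrow> sin t = sin x \<and> cos t = cos x"
    by (simp only: neg_equal_iff_equal conj_commute)
  also have "\<dots> \<longleftrightarrow> (\<exists>n::int. t = x + 2 * pi * of_int n)" by (rule sin_cos_eq_iff)
  finally show ?thesis .
qed

theorem proposition4p12:
  fixes \<mu> :: "real measure"
  assumes "\<mu> \<in> classL"
  shows "(\<forall>x::real. measure \<mu> {x} > 0 \<longrightarrow>
            measure (wrap \<mu>) {cis (- x)} > 0 \<and> measure (wrap \<mu>) {cis (- x)} = measure \<mu> {x})
       \<and> (\<forall>x::real. measure (wrap \<mu>) {cis (- x)} > 0 \<longrightarrow>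
            (\<exists>!n::int. measure \<mu> {x + 2 * pi * of_int n} > 0) \<and>
            (\<forall>n::int. measure \<mu> {x + 2 * pi * of_int n} > 0 \<longrightarrow>
               measure \<mu> {x + 2 * pi * of_int n} = measure (wrap \<mu>) {cis (- x)}))"
proof -
  have P: "real_prob_measure \<mu>" using assms unfolding classL_def by blast
  interpret prob_space \<mu> using P unfolding real_prob_measure_def by auto
  have sets: "sets \<mu> = sets borel" using P unfolding real_prob_measure_def by auto
  have sp: "space \<mu> = UNIV" using sets_eq_imp_space_eq[OF sets] by simp
  have meas: "(\<lambda>t. cis (- t)) \<in> measurable \<mu> borel"
  proof -
    have "(\<lambda>t::real. cis (- t)) \<in> borel_measurable borel"
      by (intro borel_measurable_continuous_onI continuous_intros)
    then show ?thesis using measurable_cong_sets[OF sets refl, of borel] by blast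
  qed
  have sing: "{t} \<in> sets \<mu>" for t using sets by simp
  have null: "{t} \<in> null_sets \<mu>" if "\<not> measure \<mu> {t} > 0" for t
  proof -
    have "measure \<mu> {t} = 0" using that measure_nonneg[of \<mu> "{t}"] by linarith
    then have "emeasure \<mu> {t} = 0" using emeasure_eq_measure[of "{t}"] by simp
    then show ?thesis using sing by blast
  qed
  define S where "S x = {t. \<exists>n::int. t = x + 2 * pi * of_int n}" for x
  have W: "measure (wrap \<mu>) {cis (- x)} = measure \<mu> (S x)" for x
  proof -
    have "measure (wrap \<mu>) {cis (- x)} = measure \<mu> ((\<lambda>t. cis (- t)) -` {cis (- x)} \<inter> space \<mu>)"
      unfolding wrap_def by (rule measure_distr[OF meas]) simp
    also have "(\<lambda>t. cis (- t)) -` {cis (- x)} \<inter> space \<mu> = S x"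
      unfolding S_def sp using cis_preimage[of _ x] by auto
    finally show ?thesis .
  qed
  have zero: "measure \<mu> (S x) = 0" if "\<forall>n::int. \<not> measure \<mu> {x + 2 * pi * of_int n} > 0" for x
  proof -
    have "S x = (\<Union>n::int. {x + 2 * pi * of_int n})" unfolding S_def by auto
    moreover have "(\<Union>n::int. {x + 2 * pi * of_int n}) \<in> null_sets \<mu>"
      using that null by blast
    ultimately show ?thesis using measure_eq_0_null_sets by simp
  qed
  have key: "measure \<mu> (S x) = measure \<mu> {x + 2 * pi * of_int n0}"
    if "\<forall>n::int. n \<noteq> n0 \<longrightarrow> \<not> measure \<mu> {x + 2 * pi * of_int n} > 0" for x n0
  proof -
    define N where "N n = (if n = n0 then {} else {x + 2 * pi * of_int n})" for n :: int
    have Sx: "S x = {x + 2 * pi * of_int n0} \<union> (\<Union>n. N n)" unfolding S_def N_def by auto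
    have nn: "(\<Union>n. N n) \<in> null_sets \<mu>"
    proof (rule null_sets_UN)
      fix n show "N n \<in> null_sets \<mu>" unfolding N_def using that null by auto
    qed
    show ?thesis unfolding Sx by (rule measure_Un_null_set[OF sing nn])
  qed
  have uniq: "n = n1" if "measure \<mu> {x + 2 * pi * of_int n1} > 0" "measure \<mu> {x + 2 * pi * of_int n} > 0" for x n n1
  proof -
    have e: "x + 2 * pi * of_int n1 + 2 * pi * of_int (n - n1) = x + 2 * pi * of_int n"
      by (simp add: algebra_simps)
    have "n - n1 = 0"
    proof (rule unique_atom[OF assms that(1)])
      show "measure \<mu> {x + 2 * pi * of_int n1 + 2 * pi * of_int (n - n1)} > 0"
        using that(2) by (subst e)
    qed
    then show ?thesis by simp
  qed
  have Wval: "measure (wrap \<mu>) {cis (- x)} = measure \<mu> {x + 2 * pi * of_int n1}"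
    if "measure \<mu> {x + 2 * pi * of_int n1} > 0" for x n1
  proof -
    have "\<forall>n::int. n \<noteq> n1 \<longrightarrow> \<not> measure \<mu> {x + 2 * pi * of_int n} > 0"
      using uniq[OF that] by blast
    then show ?thesis unfolding W by (rule key)
  qed
  show ?thesis
  proof (intro conjI allI impI)
    fix x assume h: "measure \<mu> {x} > 0"
    have h': "measure \<mu> {x + 2 * pi * of_int (0::int)} > 0" using h by simp
    show "measure (wrap \<mu>) {cis (- x)} = measure \<mu> {x}" using Wval[OF h'] by simp
    then show "measure (wrap \<mu>) {cis (- x)} > 0" using h by simp
  next
    fix x assume h: "measure (wrap \<mu>) {cis (- x)} > 0"
    have "\<exists>n::int. measure \<mu> {x + 2 * pi * of_int n} > 0"
    proof (rule ccontr)
      assume "\<not> ?thesis"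
      then have "measure \<mu> (S x) = 0" using zero by blast
      then show False using h W by simp
    qed
    then obtain n1 :: int where n1: "measure \<mu> {x + 2 * pi * of_int n1} > 0" by blast
    show "\<exists>!n::int. measure \<mu> {x + 2 * pi * of_int n} > 0"
      using n1 uniq by blast
  next
    fix x n assume "measure (wrap \<mu>) {cis (- x)} > 0" and hn: "measure \<mu> {x + 2 * pi * of_int n} > 0"
    show "measure \<mu> {x + 2 * pi * of_int n} = measure (wrap \<mu>) {cis (- x)}"
      using Wval[OF hn] by simp
  qed
qed
end
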